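(* Let $\mathcal{B}=(Q,\Sigma,\delta,q_0,F)$ be a Büchi automaton, let $\mathcal{S}=(X,\xrightarrow{\Sigma},\le)$ be a very-WSTS, and let $x_0\in X$. There exists $w\in L(\mathcal{B})\cap\mathrm{Traces}^\omega(\mathcal{S},x_0)$ if and only if there exists $q_f\in F$ such that $(q_f,\bot)$ is repeatedly coverable from $(q_0,x_0)$ in $\mathcal{B}\times\mathcal{S}_\bot$.
   Context: A (labeled, ordered) transition system is $\mathcal{S}=(X,\xrightarrow{\Sigma},\le)$: $X$ a set, $\Sigma$ a finite alphabet, $\xrightarrow{a}\subseteq X\times X$, $\le$ a quasi-ordering; relations extend to words. $\mathrm{Traces}^\omega(\mathcal{S},x)=\{a_1a_2\cdots\in\Sigma^\omega: x\xrightarrow{a_1}x_1\xrightarrow{a_2}x_2\cdots \text{ for some } x_1,x_2,\ldots\}$. A state $y$ is repeatedly coverable from $x$ if there are $z_0,z_1,\dots$ with $x\xrightarrow{*}z_0\xrightarrow{+}z_1\xrightarrow{+}\cdots$ and $z_i\ge y$ for all $i$. Very-WSTS: $\le$ is a wqo; $\mathcal{S}$ has strong monotonicity ($x\xrightarrow{a}y$, $x'\ge x$ imply $x'\xrightarrow{a}y'$ for some $y'\ge y$); its completion $\widehat{\mathcal{S}}=(\mathrm{Idl}(X),\Rightarrow_\Sigma,\subseteq)$ — where $\mathrm{Idl}(X)$ is the set of nonempty downward-closed directed subsets and $I\xRightarrow{a}J$ iff $J$ is a $\subseteq$-maximal ideal included in $\downarrow\{y:\exists x\in I,\ x\xrightarrow{a}y\}$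 — is deterministic, has $\subseteq$ as a wqo, is monotone, and has strong-strict monotonicity (strong monotonicity plus: $I\xRightarrow{a}J$, $I'\supset I$ imply $I'\xRightarrow{a}J'$ for some $J'\supset J$); and $\mathrm{Idl}(X)$ has finitely many levels, where $\mathrm{Idl}_0(X)=\mathrm{Idl}(X)$, $\mathrm{Idl}_n(X)$ is the set of unions of strictly increasing sequences in $\mathrm{Idl}_{n-1}(X)$, and finitely many levels means some $\mathrm{Idl}_n(X)=\emptyset$. A Büchi automaton $\mathcal{B}=(Q,\Sigma,\delta,q_0,F)$ accepts the infinite words having a run from $q_0$ visiting $F$ infinitely often; $L(\mathcal{B})$ is its language. $\mathcal{S}_\bot=(X\cup\{\bot\},\xrightarrow{\Sigma},\le_\bot)$ adds a new state $\bot$ with no transitions, below every state: $\le_\bot=\le\cup\{(\bot,y):y\in X\cup\{\bot\}\}$. The product $\mathcal{B}\times\mathcal{T}$ of $\mathcal{B}$ with a transition system $\mathcal{T}=(Y,\xrightarrow{\Sigma},\le)$ has states $Q\times Y$, alphabet $\Sigma\times Q$, ordering $(p,x)\le(q,y)$ iff $p=q$ and $x\le y$, and transitions $(p,x)\xrightarrow{(a,r)}(q,y)$ iff $(p,a,r)\in\delta$, $q=r$ and $x\xrightarrow{a}y$. *)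

theory Defs
  imports Main
begin

text \<open>A labeled transition system is given by a relation
  trans :: 'a => 's => 's => bool (trans a x y means x --a--> y) and a quasi-ordering le.
  The state set X is the carrier set C (for S it is the whole type).\<close>

definition step_rel :: "('a \<Rightarrow> 's \<Rightarrow> 's \<Rightarrow> bool) \<Rightarrow> 's \<Rightarrow> 's \<Rightarrow> bool" where
  "step_rel T x y \<longleftrightarrow> (\<exists>a. T a x y)"

definition traces_omega :: "('a \<Rightarrow> 's \<Rightarrow> 's \<Rightarrow> bool) \<Rightarrow> 's \<Rightarrow> (nat \<Rightarrow> 'a) set" where
  "traces_omega T x = {w. \<exists>xs. xs 0 = x \<and> (\<forall>i. T (w i) (xs i) (xs (Suc i)))}"

definition repeatedly_coverable ::
  "('a \<Rightarrow> 's \<Rightarrow> 's \<Rightarrow> bool) \<Rightarrow> ('s \<Rightarrow> 's \<Rightarrow> bool) \<Rightarrow> 's \<Rightarrow> 's \<Rightarrow> bool" where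
  "repeatedly_coverable T le x y \<longleftrightarrow>
     (\<exists>z :: nat \<Rightarrow> 's. (step_rel T)\<^sup>*\<^sup>* x (z 0)
        \<and> (\<forall>i. (step_rel T)\<^sup>+\<^sup>+ (z i) (z (Suc i)))
        \<and> (\<forall>i. le y (z i)))"

definition quasi_order_on :: "'s set \<Rightarrow> ('s \<Rightarrow> 's \<Rightarrow> bool) \<Rightarrow> bool" where
  "quasi_order_on C le \<longleftrightarrow> (\<forall>x\<in>C. le x x) \<and>
     (\<forall>x\<in>C. \<forall>y\<in>C. \<forall>z\<in>C. le x y \<longrightarrow> le y z \<longrightarrow> le x z)"

definition wqo_on :: "'s set \<Rightarrow> ('s \<Rightarrow> 's \<Rightarrow> bool) \<Rightarrow> bool" where
  "wqo_on C le \<longleftrightarrow> quasi_order_on C le \<and>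
     (\<forall>f :: nat \<Rightarrow> 's. (\<forall>i. f i \<in> C) \<longrightarrow> (\<exists>i j. i < j \<and> le (f i) (f j)))"

definition strongly_monotone_on ::
  "'s set \<Rightarrow> ('a \<Rightarrow> 's \<Rightarrow> 's \<Rightarrow> bool) \<Rightarrow> ('s \<Rightarrow> 's \<Rightarrow> bool) \<Rightarrow> bool" where
  "strongly_monotone_on C T le \<longleftrightarrow>
     (\<forall>a. \<forall>x\<in>C. \<forall>y\<in>C. \<forall>x'\<in>C. T a x y \<and> le x x' \<longrightarrow> (\<exists>y'\<in>C. T a x' y' \<and> le y y'))"

definition down_closure :: "('s \<Rightarrow> 's \<Rightarrow> bool) \<Rightarrow> 's set \<Rightarrow> 's set" where
  "down_closure le S = {y. \<exists>z\<in>S. le y z}"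

definition is_ideal :: "('s \<Rightarrow> 's \<Rightarrow> bool) \<Rightarrow> 's set \<Rightarrow> bool" where
  "is_ideal le I \<longleftrightarrow> I \<noteq> {}
     \<and> (\<forall>x y. y \<in> I \<longrightarrow> le x y \<longrightarrow> x \<in> I)
     \<and> (\<forall>x\<in>I. \<forall>y\<in>I. \<exists>z\<in>I. le x z \<and> le y z)"

definition Idl :: "('s \<Rightarrow> 's \<Rightarrow> bool) \<Rightarrow> 's set set" where
  "Idl le = {I. is_ideal le I}"

definition post :: "('a \<Rightarrow> 's \<Rightarrow> 's \<Rightarrow> bool) \<Rightarrow> 'a \<Rightarrow> 's set \<Rightarrow> 's set" where
  "post T a I = {y. \<exists>x\<in>I. T a x y}"

definition comp_trans ::
  "('a \<Rightarrow> 's \<Rightarrow> 's \<Rightarrow> bool) \<Rightarrow> ('s \<Rightarrow> 's \<Rightarrow> bool) \<Rightarrow> 'a \<Rightarrow> 's set \<Rightarrow> 's set \<Rightarrow> bool" where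
  "comp_trans T le a I J \<longleftrightarrow> I \<in> Idl le \<and> J \<in> Idl le
     \<and> J \<subseteq> down_closure le (post T a I)
     \<and> (\<forall>J'\<in>Idl le. J \<subseteq> J' \<and> J' \<subseteq> down_closure le (post T a I) \<longrightarrow> J' = J)"

fun idl_level :: "('s \<Rightarrow> 's \<Rightarrow> bool) \<Rightarrow> nat \<Rightarrow> 's set set" where
  "idl_level le 0 = Idl le"
| "idl_level le (Suc n) =
     {\<Union>(range f) | f. (\<forall>i. f i \<in> idl_level le n) \<and> (\<forall>i. f i \<subset> f (Suc i))}"

definition finitely_many_levels :: "('s \<Rightarrow> 's \<Rightarrow> bool) \<Rightarrow> bool" where
  "finitely_many_levels le \<longleftrightarrow> (\<exists>n. idl_level le n = {})"

definition very_wsts :: "('a::finite \<Rightarrow> 's \<Rightarrow> 's \<Rightarrow> bool) \<Rightarrow> ('s \<Rightarrow> 's \<Rightarrow> bool) \<Rightarrow> bool" where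
  "very_wsts T le \<longleftrightarrow>
     wqo_on UNIV le
   \<and> strongly_monotone_on UNIV T le
   \<comment> \<open>completion is deterministic\<close>
   \<and> (\<forall>a. \<forall>I\<in>Idl le. \<forall>J J'. comp_trans T le a I J \<and> comp_trans T le a I J' \<longrightarrow> J = J')
   \<comment> \<open>inclusion is a wqo on ideals\<close>
   \<and> wqo_on (Idl le) (\<subseteq>)
   \<comment> \<open>completion is (strongly) monotone\<close>
   \<and> strongly_monotone_on (Idl le) (comp_trans T le) (\<subseteq>)
   \<comment> \<open>strict part of strong-strict monotonicity\<close>
   \<and> (\<forall>a. \<forall>I\<in>Idl le. \<forall>J\<in>Idl le. \<forall>I'\<in>Idl le.
        comp_trans T le a I J \<and> I \<subset> I' \<longrightarrow> (\<exists>J'\<in>Idl le. comp_trans T le a I' J' \<and> J \<subset> J'))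
   \<and> finitely_many_levels le"

definition buchi_lang :: "('q \<times> 'a \<times> 'q) set \<Rightarrow> 'q \<Rightarrow> 'q set \<Rightarrow> (nat \<Rightarrow> 'a) set" where
  "buchi_lang \<delta> q0 F = {w. \<exists>r :: nat \<Rightarrow> 'q. r 0 = q0 \<and> (\<forall>i. (r i, w i, r (Suc i)) \<in> \<delta>)
      \<and> (\<exists>\<^sub>\<infinity>i. r i \<in> F)}"

text \<open>S_bot: the new state bot is None; Some x are the old states.\<close>
fun bot_trans :: "('a \<Rightarrow> 's \<Rightarrow> 's \<Rightarrow> bool) \<Rightarrow> 'a \<Rightarrow> 's option \<Rightarrow> 's option \<Rightarrow> bool" where
  "bot_trans T a (Some x) (Some y) = T a x y"
| "bot_trans T a _ _ = False"

fun bot_le :: "('s \<Rightarrow> 's \<Rightarrow> bool) \<Rightarrow> 's option \<Rightarrow> 's option \<Rightarrow> bool" where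
  "bot_le le None _ = True"
| "bot_le le (Some x) None = False"
| "bot_le le (Some x) (Some y) = le x y"

fun prod_trans :: "('q \<times> 'a \<times> 'q) set \<Rightarrow> ('a \<Rightarrow> 's \<Rightarrow> 's \<Rightarrow> bool)
    \<Rightarrow> ('a \<times> 'q) \<Rightarrow> ('q \<times> 's) \<Rightarrow> ('q \<times> 's) \<Rightarrow> bool" where
  "prod_trans \<delta> T (a, r) (p, x) (q, y) \<longleftrightarrow> (p, a, r) \<in> \<delta> \<and> q = r \<and> T a x y"

fun prod_le :: "('s \<Rightarrow> 's \<Rightarrow> bool) \<Rightarrow> ('q \<times> 's) \<Rightarrow> ('q \<times> 's) \<Rightarrow> bool" where
  "prod_le le (p, x) (q, y) \<longleftrightarrow> p = q \<and> le x y"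

end

theory Submission
  imports Defs "HOL-Library.Infinite_Set"
begin

lemma path_rtranclp:
  assumes "\<And>i. R (s i) (s (Suc i))"
  shows "k \<le> m \<Longrightarrow> R\<^sup>*\<^sup>* (s k) (s m)"
proof (induction m)
  case 0 then show ?case by simp
next
  case (Suc m)
  show ?case
  proof (cases "k = Suc m")
    case False
    then have "R\<^sup>*\<^sup>* (s k) (s m)" using Suc by simp
    then show ?thesis using assms[of m] by (meson rtranclp.rtrancl_into_rtrancl)
  qed simp
qed

lemma path_tranclp:
  assumes "\<And>i. R (s i) (s (Suc i))" "k < m"
  shows "R\<^sup>+\<^sup>+ (s k) (s m)"
proof -
  obtain m' where m: "m = Suc m'" "k \<le> m'" using assms(2) by (cases m) auto
  have "R\<^sup>*\<^sup>* (s k) (s m')" using path_rtranclp[of R s, OF assms(1) m(2)] .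
  then show ?thesis using assms(1)[of m'] m(1) by (meson rtranclp_into_tranclp1)
qed

lemma inf_path:
  assumes H: "\<And>s. s \<in> P \<Longrightarrow> \<exists>s'. R\<^sup>+\<^sup>+ s s' \<and> Q s' \<and> s' \<in> P"
    and s0: "s0 \<in> P"
  shows "\<exists>p. p 0 = s0 \<and> (\<forall>i. R (p i) (p (Suc i))) \<and> (\<exists>\<^sub>\<infinity>i. Q (p i))"
proof -
  define G where "G = {t. \<exists>n s'. (R ^^ n) t s' \<and> Q s' \<and> s' \<in> P}"
  define d where "d t = (LEAST n. \<exists>s'. (R ^^ n) t s' \<and> Q s' \<and> s' \<in> P)" for t
  have dG: "\<exists>s'. (R ^^ d t) t s' \<and> Q s' \<and> s' \<in> P" if "t \<in> G" for t
  proof -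
    have "\<exists>n s'. (R ^^ n) t s' \<and> Q s' \<and> s' \<in> P" using that unfolding G_def by simp
    then have "\<exists>n. \<exists>s'. (R ^^ n) t s' \<and> Q s' \<and> s' \<in> P" by simp
    from LeastI_ex[OF this] show ?thesis unfolding d_def .
  qed
  have d0: "Q t" if "t \<in> G" "d t = 0" for t
    using dG[OF that(1)] that(2) by auto
  have s0G: "s0 \<in> G"
  proof -
    obtain s' where ss: "R\<^sup>+\<^sup>+ s0 s'" "Q s'" "s' \<in> P" using H[OF s0] by blast
    moreover obtain n where "(R ^^ n) s0 s'" using rtranclp_imp_relpowp[OF tranclp_into_rtranclp[OF ss(1)]] by blast
    ultimately show ?thesis unfolding G_def by blast
  qed
  have succ: "\<exists>t'. R t t' \<and> t' \<in> G \<and> (0 < d t \<longrightarrow> d t' < d t)" if tG: "t \<in> G" for t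
  proof (cases "d t")
    case 0
    then obtain s' where "(R ^^ 0) t s'" "Q s'" "s' \<in> P" using dG[OF tG] by auto
    then have "t \<in> P" by simp
    then obtain s'' where s'': "R\<^sup>+\<^sup>+ t s''" "Q s''" "s'' \<in> P" using H by blast
    then obtain t1 where "R t t1" "R\<^sup>*\<^sup>* t1 s''" by (meson tranclpD)
    then obtain n where "(R ^^ n) t1 s''" using rtranclp_imp_relpowp by metis
    then have "t1 \<in> G" using s'' unfolding G_def by blast
    then show ?thesis using \<open>R t t1\<close> 0 by auto
  next
    case (Suc n)
    then obtain s' where s': "(R ^^ Suc n) t s'" "Q s'" "s' \<in> P" using dG[OF tG] by auto
    then obtain t1 where t1: "R t t1" "(R ^^ n) t1 s'" by (meson relpowp_Suc_D2)
    then have "t1 \<in> G" using s' unfolding G_def by blast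
    moreover have "d t1 \<le> n" unfolding d_def
      by (rule Least_le) (use t1(2) s' in blast)
    ultimately show ?thesis using t1(1) Suc by auto
  qed
  define nx where "nx t = (SOME t'. R t t' \<and> t' \<in> G \<and> (0 < d t \<longrightarrow> d t' < d t))" for t
  have nx: "R t (nx t) \<and> nx t \<in> G \<and> (0 < d t \<longrightarrow> d (nx t) < d t)" if "t \<in> G" for t
    unfolding nx_def using someI_ex[OF succ[OF that]] .
  define p where "p i = (nx ^^ i) s0" for i
  have pS: "p (Suc i) = nx (p i)" for i unfolding p_def by simp
  have pG: "p i \<in> G" for i
  proof (induction i)
    case 0 then show ?case by (simp add: p_def s0G)
  next
    case (Suc i) then show ?case unfolding pS using nx by blast
  qed
  have reach: "\<exists>j\<ge>i. d (p j) = 0" if "d (p i) = k" for i k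
    using that
  proof (induction k arbitrary: i rule: less_induct)
    case (less k)
    show ?case
    proof (cases "k = 0")
      case True then show ?thesis using less.prems by auto
    next
      case False
      then have "d (p (Suc i)) < k" using nx[OF pG[of i]] less.prems pS by auto
      then obtain j where "j \<ge> Suc i" "d (p j) = 0" using less.IH by blast
      then show ?thesis by (intro exI[of _ j]) auto
    qed
  qed
  have "\<exists>\<^sub>\<infinity>i. Q (p i)"
    unfolding INFM_nat_le
  proof
    fix m
    obtain j where "j \<ge> m" "d (p j) = 0" using reach[OF refl, of m] by blast
    then show "\<exists>n\<ge>m. Q (p n)" using d0[OF pG[of j]] by blast
  qed
  moreover have "\<forall>i. R (p i) (p (Suc i))"
  proof
    fix i show "R (p i) (p (Suc i))" using nx[OF pG[of i]] pS[of i] by simp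
  qed
  moreover have "p 0 = s0" by (simp add: p_def)
  ultimately show ?thesis by blast
qed

lemma cover_iff: "prod_le (bot_le le) (qf, None) s \<longleftrightarrow> fst s = qf"
  by (cases s) auto

lemma step_char:
  "step_rel (prod_trans \<delta> (bot_trans T)) s s' \<longleftrightarrow>
   (\<exists>a x x'. snd s = Some x \<and> snd s' = Some x' \<and> (fst s, a, fst s') \<in> \<delta> \<and> T a x x')"
proof
  assume "step_rel (prod_trans \<delta> (bot_trans T)) s s'"
  then obtain a r where h: "prod_trans \<delta> (bot_trans T) (a, r) s s'" unfolding step_rel_def by auto
  obtain p y q y' where e: "s = (p, y)" "s' = (q, y')" by (cases s, cases s')
  show "\<exists>a x x'. snd s = Some x \<and> snd s' = Some x' \<and> (fst s, a, fst s') \<in> \<delta> \<and> T a x x'"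
    using h unfolding e by (cases y; cases y') auto
next
  assume "\<exists>a x x'. snd s = Some x \<and> snd s' = Some x' \<and> (fst s, a, fst s') \<in> \<delta> \<and> T a x x'"
  then obtain a x x' where h: "snd s = Some x" "snd s' = Some x'" "(fst s, a, fst s') \<in> \<delta>" "T a x x'" by blast
  then have "prod_trans \<delta> (bot_trans T) (a, fst s') s s'"
    by (cases s; cases s') auto
  then show "step_rel (prod_trans \<delta> (bot_trans T)) s s'" unfolding step_rel_def by blast
qed

lemma finite_INFM_split:
  fixes r :: "nat \<Rightarrow> 'q::finite"
  assumes "\<exists>\<^sub>\<infinity>i. r i \<in> F"
  shows "\<exists>qf\<in>F. \<exists>\<^sub>\<infinity>i. r i = qf"
proof (rule ccontr)
  assume "\<not> ?thesis"
  then have "\<forall>qf\<in>F. finite {i. r i = qf}" by (simp add: Inf_many_def)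
  then have "finite (\<Union>qf\<in>F. {i. r i = qf})" by (simp add: finite_UN)
  moreover have "{i. r i \<in> F} = (\<Union>qf\<in>F. {i. r i = qf})" by auto
  ultimately show False using assms by (simp add: Inf_many_def)
qed

theorem proposition19:
  fixes \<delta> :: "('q::finite \<times> 'a::finite \<times> 'q) set" and q0 :: 'q and F :: "'q set"
    and T :: "'a \<Rightarrow> 'x \<Rightarrow> 'x \<Rightarrow> bool" and le :: "'x \<Rightarrow> 'x \<Rightarrow> bool" and x0 :: 'x
  assumes "very_wsts T le"
  shows "(\<exists>w. w \<in> buchi_lang \<delta> q0 F \<inter> traces_omega T x0) \<longleftrightarrow>
         (\<exists>qf\<in>F. repeatedly_coverable (prod_trans \<delta> (bot_trans T)) (prod_le (bot_le le))
                    (q0, Some x0) (qf, None))"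
proof
  let ?R = "step_rel (prod_trans \<delta> (bot_trans T))"
  assume "\<exists>w. w \<in> buchi_lang \<delta> q0 F \<inter> traces_omega T x0"
  then obtain w r xs where r: "r 0 = q0" "\<And>i. (r i, w i, r (Suc i)) \<in> \<delta>" "\<exists>\<^sub>\<infinity>i. r i \<in> F"
    and xs: "xs 0 = x0" "\<And>i. T (w i) (xs i) (xs (Suc i))"
    unfolding buchi_lang_def traces_omega_def by blast
  obtain qf where qf: "qf \<in> F" "\<exists>\<^sub>\<infinity>i. r i = qf" using finite_INFM_split[OF r(3)] by blast
  define S where "S = {i. r i = qf}"
  have infS: "infinite S" using qf(2) unfolding S_def Inf_many_def .
  define s where "s i = (r i, Some (xs i))" for i
  have st: "?R (s i) (s (Suc i))" for i unfolding step_char s_def using r(2) xs(2) by auto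
  define z where "z i = s (enumerate S i)" for i
  have "?R\<^sup>*\<^sup>* (q0, Some x0) (z 0)"
    using path_rtranclp[of ?R s, OF st, of 0 "enumerate S 0"] r(1) xs(1) unfolding z_def s_def by simp
  moreover have "?R\<^sup>+\<^sup>+ (z i) (z (Suc i))" for i
    unfolding z_def by (rule path_tranclp[of ?R s, OF st]) (simp add: enumerate_mono infS)
  moreover have "prod_le (bot_le le) (qf, None) (z i)" for i
    unfolding cover_iff z_def s_def using enumerate_in_set[OF infS] S_def by simp
  ultimately show "\<exists>qf\<in>F. repeatedly_coverable (prod_trans \<delta> (bot_trans T)) (prod_le (bot_le le))
                    (q0, Some x0) (qf, None)"
    using qf(1) unfolding repeatedly_coverable_def by blast
next
  let ?R = "step_rel (prod_trans \<delta> (bot_trans T))"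
  assume "\<exists>qf\<in>F. repeatedly_coverable (prod_trans \<delta> (bot_trans T)) (prod_le (bot_le le))
                    (q0, Some x0) (qf, None)"
  then obtain qf where qf: "qf \<in> F" and rc: "repeatedly_coverable (prod_trans \<delta> (bot_trans T))
     (prod_le (bot_le le)) (q0, Some x0) (qf, None)" by blast
  define P where "P = {s. \<exists>z. ?R\<^sup>*\<^sup>* s (z 0) \<and> (\<forall>i. ?R\<^sup>+\<^sup>+ (z i) (z (Suc i)))
      \<and> (\<forall>i. fst (z i) = qf)}"
  have s0: "(q0, Some x0) \<in> P" using rc unfolding repeatedly_coverable_def P_def cover_iff by simp
  have H: "\<exists>s'. ?R\<^sup>+\<^sup>+ s s' \<and> fst s' = qf \<and> s' \<in> P" if sP: "s \<in> P" for s
  proof -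
    obtain z where z: "?R\<^sup>*\<^sup>* s (z 0)" "\<And>i. ?R\<^sup>+\<^sup>+ (z i) (z (Suc i))" "\<And>i. fst (z i) = qf"
      using sP unfolding P_def by blast
    have "?R\<^sup>+\<^sup>+ s (z 1)" using z(1) z(2)[of 0] by (simp add: rtranclp_tranclp_tranclp)
    moreover have "z 1 \<in> P" unfolding P_def
      by (rule CollectI, rule exI[of _ "\<lambda>i. z (Suc i)"]) (simp add: z(2,3))
    ultimately show ?thesis using z(3) by blast
  qed
  obtain p where p: "p 0 = (q0, Some x0)" "\<And>i. ?R (p i) (p (Suc i))" "\<exists>\<^sub>\<infinity>i. fst (p i) = qf"
    using inf_path[of P ?R "\<lambda>s. fst s = qf", OF H s0] by blast
  have "\<exists>a x x'. snd (p i) = Some x \<and> snd (p (Suc i)) = Some x' \<and> (fst (p i), a, fst (p (Suc i))) \<in> \<delta> \<and> T a x x'" for i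
    using p(2)[of i] unfolding step_char .
  then obtain w where w: "\<And>i. \<exists>x x'. snd (p i) = Some x \<and> snd (p (Suc i)) = Some x' \<and> (fst (p i), w i, fst (p (Suc i))) \<in> \<delta> \<and> T (w i) x x'"
    by metis
  define xs where "xs i = the (snd (p i))" for i
  have "w \<in> buchi_lang \<delta> q0 F"
    unfolding buchi_lang_def
  proof (intro CollectI exI[of _ "\<lambda>i. fst (p i)"] conjI allI)
    show "fst (p 0) = q0" using p(1) by simp
    show "(fst (p i), w i, fst (p (Suc i))) \<in> \<delta>" for i using w[of i] by blast
    show "\<exists>\<^sub>\<infinity>i. fst (p i) \<in> F" using p(3) by (rule INFM_mono) (use qf in simp)
  qed
  moreover have "w \<in> traces_omega T x0"
    unfolding traces_omega_def
  proof (intro CollectI exI[of _ xs] conjI allI)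
    show "xs 0 = x0" using p(1) by (simp add: xs_def)
    show "T (w i) (xs i) (xs (Suc i))" for i using w[of i] by (auto simp: xs_def)
  qed
  ultimately show "\<exists>w. w \<in> buchi_lang \<delta> q0 F \<inter> traces_omega T x0" by blast
qed

end
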